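(* Let $\Omega=(G,\Lambda,\sigma)$ with $G=(V,E)$ be a feasible instance of the $q$-state Potts model with activity $0\le\beta<1$, let $v\in V\setminus\Lambda$ and $B=B_\Omega(v)$. Let $u_1v_1,\dots,u_mv_m$ be an enumeration of the edges of $G$ with $u_i\in B$, $v_i\notin B$ (different indices may share the same $u_i$ or $v_i$). Let $E(B)=\{uw\in E:u,w\in B\}$ and $\bar B=\{u\in B:\exists w\notin B, uw\in E\}$. Let $G_B$ be the graph with vertex set $(V\setminus B)\cup\bar B$ and edge set $E\setminus E(B)$, and $\Omega_B=(G_B,\Lambda,\sigma)$. For $\pi\in\mathcal{F}(B)$ write $\pi_i=\pi(u_i)$, and for $i=1,\dots,m$ let $\Omega_i^\pi$ be the instance obtained from $\Omega_B$ by fixing (adding to the pinned set) $u_j$ to color $\pi_j$ for every $j<i$, and deleting the edges $u_jv_j$ for every $j\ge i$. Then for every $\pi\in\mathcal{F}(B)$, $$\Pr_\Omega[c(B)=\pi]=\frac{w_{G[B]}(\pi)\prod_{i=1}^m\bigl(1-(1-\beta)\Pr_{\Omega_i^\pi}[c(v_i)=\pi_i]\bigr)}{\sum_{\rho\in\mathcal{F}(B)}w_{G[B]}(\rho)\prod_{i=1}^m\bigl(1-(1-\beta)\Pr_{\Omega_i^\rho}[c(v_i)=\rho_i]\bigr)}.$$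
   Context: Potts model: fix an integer $q\ge2$ and a real $\beta\ge0$; $[q]=\{1,\dots,q\}$, $0^0=1$. For a finite graph $G=(V,E)$, an instance is $\Omega=(G,\Lambda,\sigma)$ with $\Lambda\subseteq V$, $\sigma\in[q]^\Lambda$; $w_\Omega(\pi)=\beta^{|\{uv\in E:\pi(u)=\pi(v)\}|}$ if $\pi\in[q]^V$ agrees with $\sigma$ on $\Lambda$, else $0$. $\Omega$ is feasible if some $\pi$ has $w_\Omega(\pi)>0$; then $\Pr_\Omega[c(V)=\pi]=w_\Omega(\pi)/\sum_{\pi'}w_\Omega(\pi')$ and $\Pr_\Omega[c(S)=\cdot]$, $\Pr_\Omega[c(v)=\cdot]$ are its marginals (if $v\in\Lambda$ this is the point mass at $\sigma(v)$). For $S\subseteq V$ and $\rho\in[q]^S$, $w_{G[S]}(\rho)=\beta^{|\{uw\in E:u,w\in S,\rho(u)=\rho(w)\}|}$. For $S\subseteq V\setminus\Lambda$, $\mathcal{F}(S)$ is the set of feasible $\rho\in[q]^S$, i.e. those for which some $\pi\in[q]^V$ with $w_\Omega(\pi)>0$ agrees with $\rho$ on $S$. A vertex is low-degree if $\deg_G(v)<\frac{q-1}{1-\beta}-2$. $\partial B=\{u\in V\setminus B:\exists w\in B,uw\in E\}$; $B\subseteq V\setminus\Lambda$ is a permissive block in $\Omega$ if every $u\in\partial B\setminus\Lambda$ is low-degree; $B_\Omega(S)$ is the minimal permissive block containing $S$. *)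

theory Defs
  imports Complex_Main "HOL-Library.FuncSet"
begin

(* A finite simple graph is (V, E) with E a set of 2-element subsets of V.  An instance (G, \<Lambda>, \<sigma>) is given by
   V E \<Lambda> \<sigma>, where only the values of \<sigma> on \<Lambda> matter. *)

definition colorings :: "nat \<Rightarrow> 'v set \<Rightarrow> ('v \<Rightarrow> nat) set" where
  "colorings q S = S \<rightarrow>\<^sub>E {1..q}"

definition mono_edges :: "'v set set \<Rightarrow> ('v \<Rightarrow> nat) \<Rightarrow> 'v set set" where
  "mono_edges E \<pi> = {e \<in> E. \<exists>u w. e = {u, w} \<and> u \<noteq> w \<and> \<pi> u = \<pi> w}"

(* w_\<Omega>(\<pi>) ; note 0 ^ 0 = 1 in Isabelle *)
definition potts_weight :: "nat \<Rightarrow> real \<Rightarrow> 'v set \<Rightarrow> 'v set set \<Rightarrow> 'v set \<Rightarrow> ('v \<Rightarrow> nat)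
    \<Rightarrow> ('v \<Rightarrow> nat) \<Rightarrow> real" where
  "potts_weight q \<beta> V E \<Lambda> \<sigma> \<pi> =
     (if \<pi> \<in> colorings q V \<and> (\<forall>x\<in>\<Lambda>. \<pi> x = \<sigma> x)
      then \<beta> ^ card (mono_edges E \<pi>) else 0)"

definition feasible :: "nat \<Rightarrow> real \<Rightarrow> 'v set \<Rightarrow> 'v set set \<Rightarrow> 'v set \<Rightarrow> ('v \<Rightarrow> nat) \<Rightarrow> bool" where
  "feasible q \<beta> V E \<Lambda> \<sigma> = (\<exists>\<pi>\<in>colorings q V. potts_weight q \<beta> V E \<Lambda> \<sigma> \<pi> > 0)"

definition partition_fn :: "nat \<Rightarrow> real \<Rightarrow> 'v set \<Rightarrow> 'v set set \<Rightarrow> 'v set \<Rightarrow> ('v \<Rightarrow> nat) \<Rightarrow> real" where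
  "partition_fn q \<beta> V E \<Lambda> \<sigma> = (\<Sum>\<pi>\<in>colorings q V. potts_weight q \<beta> V E \<Lambda> \<sigma> \<pi>)"

definition prob_set :: "nat \<Rightarrow> real \<Rightarrow> 'v set \<Rightarrow> 'v set set \<Rightarrow> 'v set \<Rightarrow> ('v \<Rightarrow> nat)
    \<Rightarrow> 'v set \<Rightarrow> ('v \<Rightarrow> nat) \<Rightarrow> real" where
  "prob_set q \<beta> V E \<Lambda> \<sigma> S \<rho> =
     (\<Sum>\<pi>\<in>colorings q V. if restrict \<pi> S = \<rho> then potts_weight q \<beta> V E \<Lambda> \<sigma> \<pi> else 0)
       / partition_fn q \<beta> V E \<Lambda> \<sigma>"

definition prob_vertex :: "nat \<Rightarrow> real \<Rightarrow> 'v set \<Rightarrow> 'v set set \<Rightarrow> 'v set \<Rightarrow> ('v \<Rightarrow> nat)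
    \<Rightarrow> 'v \<Rightarrow> nat \<Rightarrow> real" where
  "prob_vertex q \<beta> V E \<Lambda> \<sigma> v a =
     (\<Sum>\<pi>\<in>colorings q V. if \<pi> v = a then potts_weight q \<beta> V E \<Lambda> \<sigma> \<pi> else 0)
       / partition_fn q \<beta> V E \<Lambda> \<sigma>"

definition feasible_set :: "nat \<Rightarrow> real \<Rightarrow> 'v set \<Rightarrow> 'v set set \<Rightarrow> 'v set \<Rightarrow> ('v \<Rightarrow> nat)
    \<Rightarrow> 'v set \<Rightarrow> ('v \<Rightarrow> nat) set" where
  "feasible_set q \<beta> V E \<Lambda> \<sigma> S =
     {\<rho> \<in> colorings q S. \<exists>\<pi>\<in>colorings q V. potts_weight q \<beta> V E \<Lambda> \<sigma> \<pi> > 0 \<and> restrict \<pi> S = \<rho>}"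

definition induced_weight :: "real \<Rightarrow> 'v set set \<Rightarrow> 'v set \<Rightarrow> ('v \<Rightarrow> nat) \<Rightarrow> real" where
  "induced_weight \<beta> E S \<rho> = \<beta> ^ card {e \<in> mono_edges E \<rho>. e \<subseteq> S}"

definition degree :: "'v set set \<Rightarrow> 'v \<Rightarrow> nat" where
  "degree E v = card {e \<in> E. v \<in> e}"

definition low_degree :: "nat \<Rightarrow> real \<Rightarrow> 'v set set \<Rightarrow> 'v \<Rightarrow> bool" where
  "low_degree q \<beta> E v \<longleftrightarrow> real (degree E v) < (real q - 1) / (1 - \<beta>) - 2"

definition boundary :: "'v set set \<Rightarrow> 'v set \<Rightarrow> 'v set" where
  "boundary E B = {u. u \<notin> B \<and> (\<exists>w\<in>B. {u, w} \<in> E)}"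

definition permissive_block :: "nat \<Rightarrow> real \<Rightarrow> 'v set \<Rightarrow> 'v set set \<Rightarrow> 'v set \<Rightarrow> 'v set \<Rightarrow> bool" where
  "permissive_block q \<beta> V E \<Lambda> B \<longleftrightarrow>
     B \<subseteq> V - \<Lambda> \<and> (\<forall>u \<in> boundary E B - \<Lambda>. low_degree q \<beta> E u)"

(* B_\<Omega>(S): the minimal permissive block containing S (permissive blocks are closed
   under intersection, so this is the intersection of all of them containing S) *)
definition min_block :: "nat \<Rightarrow> real \<Rightarrow> 'v set \<Rightarrow> 'v set set \<Rightarrow> 'v set \<Rightarrow> 'v set \<Rightarrow> 'v set" where
  "min_block q \<beta> V E \<Lambda> S = \<Inter>{B. S \<subseteq> B \<and> permissive_block q \<beta> V E \<Lambda> B}"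

definition inner_edges :: "'v set set \<Rightarrow> 'v set \<Rightarrow> 'v set set" where
  "inner_edges E B = {e \<in> E. e \<subseteq> B}"

definition inner_boundary :: "'v set set \<Rightarrow> 'v set \<Rightarrow> 'v set" where
  "inner_boundary E B = {u \<in> B. \<exists>w. w \<notin> B \<and> {u, w} \<in> E}"

definition GB_vertices :: "'v set \<Rightarrow> 'v set set \<Rightarrow> 'v set \<Rightarrow> 'v set" where
  "GB_vertices V E B = (V - B) \<union> inner_boundary E B"

(* edge set of \<Omega>_i^\<pi> (0-based i): E \<setminus> E(B) minus the edges u_j v_j with j \<ge> i *)
definition Omega_i_edges :: "'v set set \<Rightarrow> 'v set \<Rightarrow> ('v \<times> 'v) list \<Rightarrow> nat \<Rightarrow> 'v set set" where
  "Omega_i_edges E B es i =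
     (E - inner_edges E B) - {{fst (es ! j), snd (es ! j)} | j. i \<le> j \<and> j < length es}"

definition Omega_i_pinned :: "'v set \<Rightarrow> ('v \<times> 'v) list \<Rightarrow> nat \<Rightarrow> 'v set" where
  "Omega_i_pinned \<Lambda> es i = \<Lambda> \<union> {fst (es ! j) | j. j < i \<and> j < length es}"

definition Omega_i_pinning :: "'v set \<Rightarrow> ('v \<Rightarrow> nat) \<Rightarrow> ('v \<Rightarrow> nat) \<Rightarrow> ('v \<Rightarrow> nat)" where
  "Omega_i_pinning \<Lambda> \<sigma> \<pi> = (\<lambda>x. if x \<in> \<Lambda> then \<sigma> x else \<pi> x)"

definition block_factor :: "nat \<Rightarrow> real \<Rightarrow> 'v set \<Rightarrow> 'v set set \<Rightarrow> 'v set \<Rightarrow> ('v \<Rightarrow> nat)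
    \<Rightarrow> 'v set \<Rightarrow> ('v \<times> 'v) list \<Rightarrow> ('v \<Rightarrow> nat) \<Rightarrow> real" where
  "block_factor q \<beta> V E \<Lambda> \<sigma> B es \<pi> =
     induced_weight \<beta> E B \<pi> *
     (\<Prod>i<length es. 1 - (1 - \<beta>) *
        prob_vertex q \<beta> (GB_vertices V E B) (Omega_i_edges E B es i)
          (Omega_i_pinned \<Lambda> es i) (Omega_i_pinning \<Lambda> \<sigma> \<pi>)
          (snd (es ! i)) (\<pi> (fst (es ! i))))"

end

theory Submission
  imports Defs
begin

lemma sum_isolated:
  fixes F :: "('v \<Rightarrow> nat) \<Rightarrow> real"
  assumes fin: "finite S" and xS: "x \<in> S" and a: "a \<in> {1..q}"
    and inv: "\<And>c b. c \<in> colorings q S \<Longrightarrow> b \<in> {1..q} \<Longrightarrow> F (c(x:=b)) = F c"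
  shows "(\<Sum>c\<in>colorings q S. if c x = a then F c else 0) = (\<Sum>c\<in>colorings q S. F c) / real q"
proof -
  define S' where "S' = S - {x}"
  have xS': "x \<notin> S'" and SS: "S = insert x S'" using xS by (auto simp: S'_def)
  have col: "colorings q S = (\<lambda>(y, g). g(x := y)) ` ({1..q} \<times> colorings q S')"
    unfolding colorings_def SS by (simp add: PiE_insert_eq)
  have inj: "inj_on (\<lambda>(y, g). g(x := y)) ({1..q} \<times> colorings q S')"
    unfolding colorings_def using inj_combinator[OF xS', of "\<lambda>_. {1..q}"] by simp
  have gen: "(\<Sum>c\<in>colorings q S. G c) = (\<Sum>b\<in>{1..q}. \<Sum>g\<in>colorings q S'. G (g(x:=b)))" for G :: "('v \<Rightarrow> nat) \<Rightarrow> real"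
    unfolding col by (subst sum.reindex[OF inj]) (simp add: sum.cartesian_product split_def)
  have gx: "g(x:=b) \<in> colorings q S" if "g \<in> colorings q S'" "b \<in> {1..q}" for g b
    using that unfolding col by force
  have inv2: "F (g(x:=b)) = F (g(x:=a))" if "g \<in> colorings q S'" "b \<in> {1..q}" for g b
    using inv[OF gx[OF that(1) a] that(2)] by simp
  have "(\<Sum>c\<in>colorings q S. if c x = a then F c else 0) = (\<Sum>g\<in>colorings q S'. F (g(x:=a)))"
  proof -
    have "\<And>b. (\<Sum>g\<in>colorings q S'. if b = a then F (g(x := b)) else 0) = (if b = a then (\<Sum>g\<in>colorings q S'. F (g(x := a))) else 0)"
      by simp
    then show ?thesis unfolding gen using a by (simp add: sum.delta)
  qed
  moreover have "(\<Sum>c\<in>colorings q S. F c) = real q * (\<Sum>g\<in>colorings q S'. F (g(x:=a)))"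
  proof -
    have "(\<Sum>b\<in>{1..q}. \<Sum>g\<in>colorings q S'. F (g(x:=b))) = (\<Sum>b\<in>{1..q}. \<Sum>g\<in>colorings q S'. F (g(x:=a)))"
      by (intro sum.cong refl) (simp add: inv2)
    then show ?thesis unfolding gen by simp
  qed
  moreover have "q > 0" using a by auto
  ultimately show ?thesis by simp
qed

lemma weight_nonneg: "\<beta> \<ge> 0 \<Longrightarrow> potts_weight q \<beta> W E' P s c \<ge> 0"
  unfolding potts_weight_def by simp

lemma prob_vertex_mult:
  assumes "finite W" "\<beta> \<ge> 0"
  shows "(\<Sum>c\<in>colorings q W. if c v = a then potts_weight q \<beta> W E' P s c else 0)
       = prob_vertex q \<beta> W E' P s v a * partition_fn q \<beta> W E' P s"
proof (cases "partition_fn q \<beta> W E' P s = 0")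
  case True
  have fin: "finite (colorings q W)" unfolding colorings_def using assms(1) by (simp add: finite_PiE)
  have "\<forall>c\<in>colorings q W. potts_weight q \<beta> W E' P s c = 0"
    using True sum_nonneg_eq_0_iff[OF fin, of "potts_weight q \<beta> W E' P s"] weight_nonneg[OF assms(2)]
    unfolding partition_fn_def by blast
  then show ?thesis using True by (auto intro!: sum.neutral)
next
  case False
  then show ?thesis unfolding prob_vertex_def by simp
qed

lemma mono_insert:
  assumes "{u,v} \<notin> E'" "u \<noteq> v"
  shows "mono_edges (insert {u,v} E') c = (if c u = c v then insert {u,v} (mono_edges E' c) else mono_edges E' c)"
  using assms unfolding mono_edges_def by (auto simp: doubleton_eq_iff)

lemma weight_insert:
  assumes "finite E'" "{u,v} \<notin> E'" "u \<noteq> v" "s u = a"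
  shows "potts_weight q \<beta> W (insert {u,v} E') (insert u P) s c =
    (if c u = a then potts_weight q \<beta> W E' P s c * (if c v = a then \<beta> else 1) else 0)"
proof -
  have fm: "finite (mono_edges E' c)" using assms(1) unfolding mono_edges_def by simp
  have nm: "{u,v} \<notin> mono_edges E' c" using assms(2) unfolding mono_edges_def by simp
  show ?thesis unfolding potts_weight_def mono_insert[OF assms(2,3)]
    using assms(4) fm nm by auto
qed

lemma step_lemma:
  assumes W: "finite W" and E': "finite E'" and uW: "u \<in> W" and vW: "v \<in> W" and uv: "u \<noteq> v"
    and ne: "{u,v} \<notin> E'" and su: "s u = a" and a: "a \<in> {1..q}" and b: "\<beta> \<ge> 0"
    and iso: "u \<in> P \<or> (\<forall>e\<in>E'. u \<notin> e)"
  shows "partition_fn q \<beta> W (insert {u,v} E') (insert u P) s =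
    (if u \<in> P then 1 else 1 / real q) * partition_fn q \<beta> W E' P s *
    (1 - (1 - \<beta>) * prob_vertex q \<beta> W E' P s v a)"
proof -
  let ?w = "potts_weight q \<beta> W E' P s"
  let ?Z = "partition_fn q \<beta> W E' P s"
  let ?S = "\<Sum>c\<in>colorings q W. if c v = a then ?w c else 0"
  have pw: "potts_weight q \<beta> W (insert {u,v} E') (insert u P) s c =
     (if c u = a then ?w c else 0) - (1 - \<beta>) * (if c u = a then (if c v = a then ?w c else 0) else 0)" for c
    unfolding weight_insert[of E' u v s a, OF E' ne uv su] by (auto simp: algebra_simps)
  have Z': "partition_fn q \<beta> W (insert {u,v} E') (insert u P) s =
     (\<Sum>c\<in>colorings q W. if c u = a then ?w c else 0) - (1 - \<beta>) *
     (\<Sum>c\<in>colorings q W. if c u = a then (if c v = a then ?w c else 0) else 0)"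
    unfolding partition_fn_def pw by (simp add: sum_subtractf sum_distrib_left)
  have S: "?S = prob_vertex q \<beta> W E' P s v a * ?Z" by (rule prob_vertex_mult[OF W b])
  show ?thesis
  proof (cases "u \<in> P")
    case True
    have "\<And>c. (if c u = a then ?w c else 0) = ?w c"
      using True su unfolding potts_weight_def by auto
    then have e1: "(\<Sum>c\<in>colorings q W. if c u = a then ?w c else 0) = ?Z"
      unfolding partition_fn_def by simp
    have "\<And>c. (if c u = a then (if c v = a then ?w c else 0) else 0) = (if c v = a then ?w c else 0)"
      using True su unfolding potts_weight_def by auto
    then have e2: "(\<Sum>c\<in>colorings q W. if c u = a then (if c v = a then ?w c else 0) else 0) = ?S"
      by simp
    have "partition_fn q \<beta> W (insert {u,v} E') (insert u P) s = ?Z - (1 - \<beta>) * ?S"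
      using Z' unfolding e1 e2 .
    then show ?thesis using True unfolding S by (simp add: algebra_simps)
  next
    case False
    with iso have nu: "\<forall>e\<in>E'. u \<notin> e" by simp
    have me: "mono_edges E' (c(u:=b)) = mono_edges E' c" for c b
      using nu unfolding mono_edges_def by (auto simp: fun_upd_apply) (metis insertI1 insert_commute)+
    have winv: "?w (c(u:=b)) = ?w c" if "c \<in> colorings q W" "b \<in> {1..q}" for c b
    proof -
      have "c(u:=b) \<in> colorings q W" using that uW unfolding colorings_def by (auto simp: PiE_iff extensional_def)
      then show ?thesis using that False unfolding potts_weight_def me
        by (auto simp: fun_upd_apply split: if_splits)
    qed
    have 1: "(\<Sum>c\<in>colorings q W. if c u = a then ?w c else 0) = ?Z / real q"
      unfolding partition_fn_def by (rule sum_isolated[OF W uW a winv])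
    have 2: "(\<Sum>c\<in>colorings q W. if c u = a then (if c v = a then ?w c else 0) else 0) = ?S / real q"
      by (rule sum_isolated[OF W uW a]) (use winv uv in \<open>auto simp: fun_upd_apply\<close>)
    show ?thesis using False unfolding Z' 1 2 S by (simp add: algebra_simps add_divide_distrib[symmetric])
  qed
qed

lemma mono_mem: "e \<in> E' \<Longrightarrow> e = {x,y} \<Longrightarrow> x \<noteq> y \<Longrightarrow> e \<in> mono_edges E' c \<longleftrightarrow> c x = c y"
  by (auto simp: mono_edges_def doubleton_eq_iff)

lemma weight_pin_cong: "(\<forall>x\<in>P. s x = s' x) \<Longrightarrow> potts_weight q \<beta> W E' P s = potts_weight q \<beta> W E' P s'"
  unfolding potts_weight_def by (intro ext) auto



theorem mainTheorem6:
  fixes q :: nat and \<beta> :: real and V :: "'v set" and E :: "'v set set"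
    and \<Lambda> :: "'v set" and \<sigma> :: "'v \<Rightarrow> nat" and v :: 'v and B :: "'v set"
    and es :: "('v \<times> 'v) list" and \<pi> :: "'v \<Rightarrow> nat"
  assumes "q \<ge> 2" and "0 \<le> \<beta>" and "\<beta> < 1"
    and "finite V" and "E \<subseteq> {{x, y} | x y. x \<in> V \<and> y \<in> V \<and> x \<noteq> y}"
    and "\<Lambda> \<subseteq> V" and "\<forall>x\<in>\<Lambda>. \<sigma> x \<in> {1..q}"
    and "feasible q \<beta> V E \<Lambda> \<sigma>"
    and "v \<in> V - \<Lambda>"
    and "B = min_block q \<beta> V E \<Lambda> {v}"
    and "distinct es" and "set es = {(x, y). {x, y} \<in> E \<and> x \<in> B \<and> y \<notin> B}"
    and "\<pi> \<in> feasible_set q \<beta> V E \<Lambda> \<sigma> B"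
  shows "prob_set q \<beta> V E \<Lambda> \<sigma> B \<pi> =
           block_factor q \<beta> V E \<Lambda> \<sigma> B es \<pi> /
           (\<Sum>\<rho>\<in>feasible_set q \<beta> V E \<Lambda> \<sigma> B. block_factor q \<beta> V E \<Lambda> \<sigma> B es \<rho>)"
proof -
  note q2 = assms(1) and b0 = assms(2) and finV = assms(4) and Esub = assms(5)
    and LV = assms(6) and feas = assms(8) and vV = assms(9) and Bdef = assms(10)
    and dist = assms(11) and setes = assms(12) and piF = assms(13)
  have edge: "\<exists>x y. e = {x,y} \<and> x \<in> V \<and> y \<in> V \<and> x \<noteq> y" if "e \<in> E" for e
    using Esub that by blast
  have EV: "e \<subseteq> V" if "e \<in> E" for e using edge[OF that] by auto
  have finE: "finite E"
    by (rule finite_subset[of E "Pow V"]) (use EV finV in auto)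
  have permV: "permissive_block q \<beta> V E \<Lambda> (V - \<Lambda>)"
    unfolding permissive_block_def boundary_def using EV by blast
  have BVL: "B \<subseteq> V - \<Lambda>"
    unfolding Bdef min_block_def using permV vV by blast
  have BV: "B \<subseteq> V" and BL: "B \<inter> \<Lambda> = {}" using BVL by auto
  define m where "m = length es"
  define u where "u i = fst (es ! i)" for i
  define vv where "vv i = snd (es ! i)" for i
  have esp: "{u i, vv i} \<in> E \<and> u i \<in> B \<and> vv i \<notin> B" if "i < m" for i
  proof -
    have "es ! i \<in> set es" using that m_def by simp
    then show ?thesis unfolding setes u_def vv_def by (auto simp: case_prod_beta)
  qed
  have uv_ne: "u i \<noteq> vv i" if "i < m" for i using esp[OF that] by auto
  define W where "W = GB_vertices V E B"
  define U where "U = inner_boundary E B"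
  have W_eq: "W = (V - B) \<union> U" unfolding W_def U_def GB_vertices_def ..
  have UB: "U \<subseteq> B" unfolding U_def inner_boundary_def by auto
  have WV: "W \<subseteq> V" using W_eq UB BV by auto
  have finW: "finite W" using WV finV finite_subset by auto
  have uU: "u i \<in> U" if "i < m" for i
    using esp[OF that] unfolding U_def inner_boundary_def by blast
  have uW: "u i \<in> W" if "i < m" for i using uU[OF that] W_eq by auto
  have vW: "vv i \<in> W" if "i < m" for i using esp[OF that] EV W_eq by blast
  have eW: "e \<subseteq> W" if eE0: "e \<in> E" and nB0: "\<not> e \<subseteq> B" for e
  proof -
    obtain x y where e: "e = {x,y}" "x \<in> V" "y \<in> V" "x \<noteq> y" using edge[OF eE0] by blast
    have "x \<in> W" 
    proof (cases "x \<in> B")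
      case True
      then have "y \<notin> B" using nB0 e by auto
      then have "x \<in> U" unfolding U_def inner_boundary_def using True eE0 e by blast
      then show ?thesis using W_eq by auto
    qed (use e W_eq in auto)
    moreover have "y \<in> W" 
    proof (cases "y \<in> B")
      case True
      then have "x \<notin> B" using nB0 e by auto
      moreover have "{y,x} \<in> E" using eE0 e by (simp add: insert_commute)
      ultimately have "y \<in> U" unfolding U_def inner_boundary_def using True by blast
      then show ?thesis using W_eq by auto
    qed (use e W_eq in auto)
    ultimately show ?thesis using e by auto
  qed
  define Ei where "Ei i = Omega_i_edges E B es i" for i
  define Pi where "Pi i = Omega_i_pinned \<Lambda> es i" for i
  define R where "R i = {{fst (es ! j), snd (es ! j)} | j. i \<le> j \<and> j < length es}" for i
  have Ei_eq: "Ei i = (E - inner_edges E B) - R i" for i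
    unfolding Ei_def R_def Omega_i_edges_def ..
  have finEi: "finite (Ei i)" for i using finE unfolding Ei_eq by auto
  have R_Suc: "R i = insert {u i, vv i} (R (Suc i))" if "i < m" for i
    using that unfolding R_def u_def vv_def m_def by (auto simp: le_eq_less_or_eq Suc_le_eq)
  have eR: "{u i, vv i} \<notin> R (Suc i)" if "i < m" for i
  proof
    assume "{u i, vv i} \<in> R (Suc i)"
    then obtain j where j: "Suc i \<le> j" "j < m" "{u i, vv i} = {u j, vv j}"
      unfolding R_def u_def vv_def m_def by auto
    have "j < m" using j by simp
    from j(3) have "(u i = u j \<and> vv i = vv j) \<or> (u i = vv j \<and> vv i = u j)"
      by (auto simp: doubleton_eq_iff)
    then show False
    proof
      assume "u i = u j \<and> vv i = vv j"
      then have "es ! i = es ! j" unfolding u_def vv_def by (simp add: prod_eq_iff)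
      then show False using dist j that m_def nth_eq_iff_index_eq by fastforce
    next
      assume "u i = vv j \<and> vv i = u j"
      then show False using esp[OF \<open>j < m\<close>] esp[OF that] by auto
    qed
  qed
  have eEB: "{u i, vv i} \<in> E - inner_edges E B" if "i < m" for i
    using esp[OF that] unfolding inner_edges_def by auto
  have Ei_Suc: "Ei (Suc i) = insert {u i, vv i} (Ei i)" if "i < m" for i
    unfolding Ei_eq R_Suc[OF that] using eEB[OF that] eR[OF that] by auto
  have eEi: "{u i, vv i} \<notin> Ei i" if "i < m" for i
    unfolding Ei_eq R_Suc[OF that] by auto
  have Pi_Suc: "Pi (Suc i) = insert (u i) (Pi i)" if "i < m" for i
    using that unfolding Pi_def Omega_i_pinned_def u_def m_def by (auto simp: less_Suc_eq)
  have Pi0: "Pi 0 = \<Lambda>" unfolding Pi_def Omega_i_pinned_def by simp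
  have Pim: "Pi m = \<Lambda> \<union> U"
  proof -
    have "{fst (es ! j) | j. j < m \<and> j < length es} = U"
    proof
      show "{fst (es ! j) | j. j < m \<and> j < length es} \<subseteq> U" using uU unfolding u_def by auto
      show "U \<subseteq> {fst (es ! j) | j. j < m \<and> j < length es}"
      proof
        fix x assume "x \<in> U"
        then obtain w where "x \<in> B" "w \<notin> B" "{x, w} \<in> E" unfolding U_def inner_boundary_def by auto
        then have "(x, w) \<in> set es" unfolding setes by auto
        then obtain j where "j < length es" "es ! j = (x, w)" by (auto simp: in_set_conv_nth)
        then show "x \<in> {fst (es ! j) | j. j < m \<and> j < length es}" unfolding m_def by force
      qed
    qed
    then show ?thesis unfolding Pi_def Omega_i_pinned_def m_def by simp
  qed
  have Eim: "Ei m = E - inner_edges E B" unfolding Ei_eq R_def m_def by auto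
  have iso: "u i \<in> Pi i \<or> (\<forall>e\<in>Ei i. u i \<notin> e)" if "i < m" for i
  proof (cases "u i \<in> Pi i")
    case True then show ?thesis by simp
  next
    case nP: False
    have "\<forall>e\<in>Ei i. u i \<notin> e"
    proof (intro ballI notI)
      fix e assume eE: "e \<in> Ei i" and ue: "u i \<in> e"
      then have eE': "e \<in> E" "\<not> e \<subseteq> B" "e \<notin> R i" unfolding Ei_eq inner_edges_def by auto
      obtain x y where e: "e = {x,y}" "x \<noteq> y" using edge[OF eE'(1)] by blast
      obtain y' where y': "e = {u i, y'}" using ue e by auto
      have "y' \<notin> B" using eE'(2) y' esp[OF that] by auto
      then have "(u i, y') \<in> set es" unfolding setes using eE'(1) y' esp[OF that] by auto
      then obtain k where k: "k < m" "es ! k = (u i, y')" by (auto simp: in_set_conv_nth m_def)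
      show False
      proof (cases "k < i")
        case True
        then have "u i \<in> Pi i" unfolding Pi_def Omega_i_pinned_def using k m_def
          by (auto intro!: exI[of _ k] simp: u_def)
        then show False using nP by simp
      next
        case False
        then have "e \<in> R i" unfolding R_def using k y' m_def by (auto intro!: exI[of _ k])
        then show False using eE'(3) by simp
      qed
    qed
    then show ?thesis by simp
  qed
  define s where "s \<rho> = Omega_i_pinning \<Lambda> \<sigma> \<rho>" for \<rho> :: "'v \<Rightarrow> nat"
  define Z where "Z \<rho> i = partition_fn q \<beta> W (Ei i) (Pi i) (s \<rho>)" for \<rho> i
  define PV where "PV \<rho> i = prob_vertex q \<beta> W (Ei i) (Pi i) (s \<rho>) (vv i) (\<rho> (u i))" for \<rho> i
  define cf where "cf i = (if u i \<in> Pi i then 1 else 1 / real q)" for i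
  define Z0 where "Z0 = partition_fn q \<beta> W (Ei 0) \<Lambda> \<sigma>"
  have su: "s \<rho> (u i) = \<rho> (u i)" if "i < m" for \<rho> i
    using esp[OF that] BL unfolding s_def Omega_i_pinning_def by auto
  have Z0eq: "Z \<rho> 0 = Z0" for \<rho>
  proof -
    have "potts_weight q \<beta> W (Ei 0) \<Lambda> (s \<rho>) = potts_weight q \<beta> W (Ei 0) \<Lambda> \<sigma>"
      by (rule weight_pin_cong) (simp add: s_def Omega_i_pinning_def)
    then show ?thesis unfolding Z_def Z0_def Pi0 partition_fn_def by simp
  qed
  have tele: "Z \<rho> i = Z0 * (\<Prod>j<i. cf j * (1 - (1 - \<beta>) * PV \<rho> j))"
    if rB: "\<rho> \<in> colorings q B" and "i \<le> m" for \<rho> i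
    using that(2)
  proof (induction i)
    case 0 then show ?case using Z0eq by simp
  next
    case (Suc i)
    then have im: "i < m" by simp
    have a: "\<rho> (u i) \<in> {1..q}" using rB esp[OF im] unfolding colorings_def by auto
    have "Z \<rho> (Suc i) = cf i * Z \<rho> i * (1 - (1 - \<beta>) * PV \<rho> i)"
      unfolding Z_def Ei_Suc[OF im] Pi_Suc[OF im] cf_def PV_def
      by (rule step_lemma[where s="s \<rho>" and a="\<rho> (u i)" and P="Pi i" and E'="Ei i", OF finW finEi[of i] uW[OF im] vW[OF im] uv_ne[OF im] eEi[OF im] su[OF im] a b0 iso[OF im]])
    then show ?case using Suc by (simp add: algebra_simps)
  qed
  define w where "w = potts_weight q \<beta> V E \<Lambda> \<sigma>"
  define N where "N \<rho> = (\<Sum>c\<in>colorings q V. if restrict c B = \<rho> then w c else 0)" for \<rho>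
  have finCV: "finite (colorings q V)" unfolding colorings_def using finV by (simp add: finite_PiE)
  have finCW: "finite (colorings q W)" unfolding colorings_def using finW by (simp add: finite_PiE)
  have finCB: "finite (colorings q B)" unfolding colorings_def using finV BV finite_subset
    by (blast intro: finite_PiE)
  have WB: "W \<inter> B = U" using W_eq UB by auto
  have Nform: "N \<rho> = induced_weight \<beta> E B \<rho> * Z \<rho> m" if rB: "\<rho> \<in> colorings q B" for \<rho>
  proof -
    define C1 where "C1 = {c \<in> colorings q V. restrict c B = \<rho>}"
    define C2 where "C2 = {d \<in> colorings q W. \<forall>x\<in>U. d x = \<rho> x}"
    define ext where "ext d = (\<lambda>x. if x \<in> B then \<rho> x else d x)" for d :: "'v \<Rightarrow> nat"
    let ?wW = "potts_weight q \<beta> W (Ei m) (Pi m) (s \<rho>)"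
    have rB': "\<rho> \<in> extensional B" "\<forall>x\<in>B. \<rho> x \<in> {1..q}" using rB unfolding colorings_def by (auto simp: PiE_def)
    have bij: "bij_betw ext C2 C1"
    proof (rule bij_betw_byWitness[where f'="\<lambda>c. restrict c W"])
      show "\<forall>d\<in>C2. restrict (ext d) W = d"
      proof
        fix d assume d: "d \<in> C2"
        show "restrict (ext d) W = d"
        proof
          fix x
          have dU: "\<forall>x\<in>U. d x = \<rho> x" and dE: "d \<in> extensional W"
            using d unfolding C2_def colorings_def by (auto simp: PiE_def)
          show "restrict (ext d) W x = d x"
          proof (cases "x \<in> W")
            case True
            then show ?thesis using dU WB unfolding ext_def by auto
          next
            case False
            then show ?thesis using dE by (simp add: extensional_def)
          qed
        qed
      qed
      show "\<forall>c\<in>C1. ext (restrict c W) = c"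
      proof
        fix c assume c: "c \<in> C1"
        show "ext (restrict c W) = c"
        proof
          fix x
          have cr: "restrict c B = \<rho>" and cE: "c \<in> extensional V"
            using c unfolding C1_def colorings_def by (auto simp: PiE_def)
          have "x \<in> B \<Longrightarrow> \<rho> x = c x" unfolding cr[symmetric] by simp
          moreover have "x \<notin> W \<Longrightarrow> x \<notin> B \<Longrightarrow> c x = undefined"
          proof -
            assume "x \<notin> W" "x \<notin> B"
            then have "x \<notin> V" using W_eq by auto
            then show ?thesis using cE by (simp add: extensional_def)
          qed
          ultimately show "ext (restrict c W) x = c x" unfolding ext_def by auto
        qed
      qed
      show "ext ` C2 \<subseteq> C1"
      proof
        fix c assume "c \<in> ext ` C2"
        then obtain d where d: "d \<in> C2" "c = ext d" by auto
        have dW': "\<forall>x\<in>W. d x \<in> {1..q}" "d \<in> extensional W" and dU: "\<forall>x\<in>U. d x = \<rho> x"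
          using d unfolding C2_def colorings_def by (auto simp: PiE_def)
        have "\<forall>x\<in>V. c x \<in> {1..q}"
        proof
          fix x assume x: "x \<in> V"
          show "c x \<in> {1..q}"
          proof (cases "x \<in> B")
            case True then show ?thesis using rB' d(2) unfolding ext_def by simp
          next
            case False then have "x \<in> W" using x W_eq by auto
            then show ?thesis using dW' d(2) False unfolding ext_def by simp
          qed
        qed
        moreover have "c \<in> extensional V"
        unfolding extensional_def
        proof (intro CollectI allI impI)
          fix x assume x: "x \<notin> V"
          then have "x \<notin> B" "x \<notin> W" using BV WV by auto
          then show "c x = undefined" using dW'(2) d(2) unfolding ext_def by (simp add: extensional_def)
        qed
        ultimately have "c \<in> colorings q V" unfolding colorings_def by (simp add: PiE_iff)
        moreover have "restrict c B = \<rho>"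
        proof
          fix x show "restrict c B x = \<rho> x"
            using rB'(1) d(2) unfolding ext_def by (cases "x \<in> B") (auto simp: extensional_def)
        qed
        ultimately show "c \<in> C1" unfolding C1_def by simp
      qed
      show "(\<lambda>c. restrict c W) ` C1 \<subseteq> C2"
      proof
        fix d assume "d \<in> (\<lambda>c. restrict c W) ` C1"
        then obtain c where c: "c \<in> C1" "d = restrict c W" by auto
        have cr: "restrict c B = \<rho>" and cV: "\<forall>x\<in>V. c x \<in> {1..q}"
          using c unfolding C1_def colorings_def by (auto simp: PiE_def)
        have "d \<in> colorings q W" unfolding colorings_def c(2) restrict_PiE_iff using cV WV by auto
        moreover have "\<forall>x\<in>U. d x = \<rho> x"
        proof
          fix x assume x: "x \<in> U"
          then have "x \<in> W" "x \<in> B" using W_eq UB by auto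
          then show "d x = \<rho> x" unfolding c(2) cr[symmetric] by simp
        qed
        ultimately show "d \<in> C2" unfolding C2_def by simp
      qed
    qed
    have N1: "N \<rho> = (\<Sum>c\<in>C1. w c)" unfolding N_def C1_def by (simp add: sum.inter_filter[OF finCV])
    have Z1: "Z \<rho> m = (\<Sum>d\<in>C2. ?wW d)"
    proof -
      have "Z \<rho> m = (\<Sum>d\<in>colorings q W. if (\<forall>x\<in>U. d x = \<rho> x) then ?wW d else 0)"
        unfolding Z_def partition_fn_def
      proof (intro sum.cong refl)
        fix d show "?wW d = (if (\<forall>x\<in>U. d x = \<rho> x) then ?wW d else 0)"
          using UB BL unfolding potts_weight_def Pim s_def Omega_i_pinning_def by auto
      qed
      then show ?thesis unfolding C2_def by (simp add: sum.inter_filter[OF finCW])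
    qed
    have pt: "w (ext d) = induced_weight \<beta> E B \<rho> * ?wW d" if d: "d \<in> C2" for d
    proof -
      have dW: "d \<in> colorings q W" and dU: "\<forall>x\<in>U. d x = \<rho> x" using d unfolding C2_def by auto
      have eC: "ext d \<in> colorings q V" using bij d unfolding bij_betw_def C1_def by auto
      have onW: "ext d x = d x" if "x \<in> W" for x using that dU WB unfolding ext_def by auto
      have onB: "ext d x = \<rho> x" if "x \<in> B" for x using that unfolding ext_def by auto
      have pin: "(\<forall>x\<in>\<Lambda>. ext d x = \<sigma> x) \<longleftrightarrow> (\<forall>x\<in>Pi m. d x = s \<rho> x)"
      proof -
        have onL: "ext d x = d x" if "x \<in> \<Lambda>" for x using that BL unfolding ext_def by auto
        have "x \<notin> \<Lambda>" if "x \<in> U" for x using that UB BL by auto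
        then show ?thesis unfolding Pim s_def Omega_i_pinning_def using dU onL by auto
      qed
      have mono: "mono_edges E (ext d) = {e \<in> mono_edges E \<rho>. e \<subseteq> B} \<union> mono_edges (Ei m) d"
      proof (intro set_eqI iffI)
        fix e assume e: "e \<in> mono_edges E (ext d)"
        then have eE: "e \<in> E" unfolding mono_edges_def by auto
        obtain x y where xy: "e = {x,y}" "x \<noteq> y" using edge[OF eE] by blast
        show "e \<in> {e \<in> mono_edges E \<rho>. e \<subseteq> B} \<union> mono_edges (Ei m) d"
        proof (cases "e \<subseteq> B")
          case True
          then show ?thesis using e xy eE mono_mem[OF eE xy] onB by auto
        next
          case False
          then have "e \<in> Ei m" "e \<subseteq> W" using eE eW unfolding Eim inner_edges_def by auto
          then show ?thesis using e xy mono_mem[OF eE xy] mono_mem[OF \<open>e \<in> Ei m\<close> xy] onW by auto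
        qed
      next
        fix e assume e: "e \<in> {e \<in> mono_edges E \<rho>. e \<subseteq> B} \<union> mono_edges (Ei m) d"
        then have eE: "e \<in> E" unfolding mono_edges_def Eim by auto
        obtain x y where xy: "e = {x,y}" "x \<noteq> y" using edge[OF eE] by blast
        show "e \<in> mono_edges E (ext d)"
        proof (cases "e \<subseteq> B")
          case True
          then have "e \<notin> Ei m" unfolding Eim inner_edges_def by auto
          then have "e \<notin> mono_edges (Ei m) d" unfolding mono_edges_def by auto
          then show ?thesis using True e xy mono_mem[OF eE xy] onB by auto
        next
          case False
          then have "e \<in> Ei m" "e \<subseteq> W" using eE eW unfolding Eim inner_edges_def by auto
          then show ?thesis using e False xy mono_mem[OF eE xy] mono_mem[OF \<open>e \<in> Ei m\<close> xy] onW by auto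
        qed
      qed
      have disj: "{e \<in> mono_edges E \<rho>. e \<subseteq> B} \<inter> mono_edges (Ei m) d = {}"
        unfolding mono_edges_def Eim inner_edges_def by auto
      have fin1: "finite {e \<in> mono_edges E \<rho>. e \<subseteq> B}" using finE unfolding mono_edges_def by auto
      have fin2: "finite (mono_edges (Ei m) d)" using finEi[of m] unfolding mono_edges_def by auto
      have "card (mono_edges E (ext d)) = card {e \<in> mono_edges E \<rho>. e \<subseteq> B} + card (mono_edges (Ei m) d)"
        unfolding mono using card_Un_disjoint[OF fin1 fin2 disj] .
      then show ?thesis
        unfolding w_def potts_weight_def induced_weight_def using eC dW pin
        by (simp add: power_add)
    qed
    have "N \<rho> = (\<Sum>d\<in>C2. w (ext d))" unfolding N1 by (rule sum.reindex_bij_betw[OF bij, symmetric])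
    also have "\<dots> = induced_weight \<beta> E B \<rho> * Z \<rho> m"
      unfolding Z1 sum_distrib_left using pt by simp
    finally show ?thesis .
  qed
  define K where "K = Z0 * (\<Prod>j<m. cf j)"
  define bf where "bf \<rho> = block_factor q \<beta> V E \<Lambda> \<sigma> B es \<rho>" for \<rho>
  define F where "F = feasible_set q \<beta> V E \<Lambda> \<sigma> B"
  have NK: "N \<rho> = K * bf \<rho>" if rB: "\<rho> \<in> colorings q B" for \<rho>
  proof -
    have bfe: "bf \<rho> = induced_weight \<beta> E B \<rho> * (\<Prod>j<m. 1 - (1 - \<beta>) * PV \<rho> j)"
      unfolding bf_def block_factor_def PV_def W_def Ei_def Pi_def s_def vv_def u_def m_def ..
    have "N \<rho> = induced_weight \<beta> E B \<rho> * (Z0 * (\<Prod>j<m. cf j * (1 - (1 - \<beta>) * PV \<rho> j)))"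
      unfolding Nform[OF rB] tele[OF rB order_refl] ..
    then show ?thesis unfolding bfe K_def prod.distrib by (simp add: algebra_simps)
  qed
  have wnn: "w c \<ge> 0" for c unfolding w_def by (rule weight_nonneg[OF b0])
  have FB: "F \<subseteq> colorings q B" unfolding F_def feasible_set_def by auto
  have N0: "N \<rho> = 0" if "\<rho> \<in> colorings q B - F" for \<rho>
    unfolding N_def
  proof (intro sum.neutral ballI)
    fix c assume c: "c \<in> colorings q V"
    show "(if restrict c B = \<rho> then w c else 0) = 0"
    proof (cases "restrict c B = \<rho>")
      case True
      have "\<not> w c > 0" using that c True unfolding F_def feasible_set_def w_def by auto
      then show ?thesis using wnn[of c] True by simp
    qed simp
  qed
  have PFsum: "partition_fn q \<beta> V E \<Lambda> \<sigma> = (\<Sum>\<rho>\<in>colorings q B. N \<rho>)"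
  proof -
    have rc: "restrict c B \<in> colorings q B" if "c \<in> colorings q V" for c
      using that BV unfolding colorings_def by (auto simp: PiE_def Pi_def)
    have "(\<Sum>\<rho>\<in>colorings q B. N \<rho>) = (\<Sum>c\<in>colorings q V. \<Sum>\<rho>\<in>colorings q B. if restrict c B = \<rho> then w c else 0)"
      unfolding N_def by (rule sum.swap)
    also have "\<dots> = (\<Sum>c\<in>colorings q V. w c)"
      by (intro sum.cong refl) (simp add: sum.delta'[OF finCB] rc)
    finally show ?thesis unfolding partition_fn_def w_def by simp
  qed
  have PFpos: "partition_fn q \<beta> V E \<Lambda> \<sigma> > 0"
  proof -
    obtain c where c: "c \<in> colorings q V" "w c > 0" using feas unfolding feasible_def w_def by auto
    have "w c \<le> (\<Sum>c\<in>colorings q V. w c)" by (rule member_le_sum[OF c(1)]) (use wnn finCV in auto)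
    then show ?thesis using c unfolding partition_fn_def w_def by simp
  qed
  have PFF: "partition_fn q \<beta> V E \<Lambda> \<sigma> = K * (\<Sum>\<rho>\<in>F. bf \<rho>)"
  proof -
    have "partition_fn q \<beta> V E \<Lambda> \<sigma> = (\<Sum>\<rho>\<in>F. N \<rho>)"
      unfolding PFsum by (rule sum.mono_neutral_right[OF finCB FB]) (use N0 in auto)
    also have "\<dots> = (\<Sum>\<rho>\<in>F. K * bf \<rho>)" using NK FB by (intro sum.cong refl) auto
    finally show ?thesis by (simp add: sum_distrib_left)
  qed
  have Kne: "K \<noteq> 0" using PFF PFpos by auto
  have piB: "\<pi> \<in> colorings q B" using piF FB unfolding F_def by auto
  have "prob_set q \<beta> V E \<Lambda> \<sigma> B \<pi> = N \<pi> / partition_fn q \<beta> V E \<Lambda> \<sigma>"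
    unfolding prob_set_def N_def w_def ..
  also have "\<dots> = K * bf \<pi> / (K * (\<Sum>\<rho>\<in>F. bf \<rho>))" unfolding NK[OF piB] PFF ..
  also have "\<dots> = bf \<pi> / (\<Sum>\<rho>\<in>F. bf \<rho>)" using Kne by simp
  finally show ?thesis unfolding bf_def F_def .
qed

end
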